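(* Let $G$ be a finite graph with irreducible components $G_1,\dots,G_m$, and let $X$ be its graph C*-correspondence over $A=C(G^{(0)})$. Then for every tracial state $\tau$ of $A$, \[h_X^\tau=\max\{\log\lambda_{G_s}:G_s\text{ is communicated by some vertex }v\text{ with }\tau(p_v)\neq0\}.\]
   Context: $G$ is a finite directed graph with vertex set $G^{(0)}=\{v_1,\dots,v_n\}$, edge set $G^{(1)}$, source and range maps $s,r$; adjacency matrix $G_{ij}=\#\{e:s(e)=v_i,r(e)=v_j\}$. $A=C(G^{(0)})$ is spanned by orthogonal projections $p_v$, $v\in G^{(0)}$; tracial states of $A$ correspond to probability vectors $(\tau(p_{v}))_v$. The graph C*-correspondence $X$ is spanned over $A$ by vectors $x_e$, $e\in G^{(1)}$, with $\langle x_e,x_f\rangle=\delta_{e,f}p_{s(f)}$, $p_vx_e=\delta_{v,r(e)}x_e$, $x_ep_v=\delta_{s(e),v}x_e$; $\{x_e\}$ is a unit decomposition ($\sum_e\theta_{x_e,x_e}=1_X$). For words $\mu=\mu_k\cdots\mu_1$ in edges, $x_\mu=x_{\mu_k}\otimes\cdots\otimes x_{\mu_1}$. $h_X^\tau=\limsup_k k^{-1}\log\sum_{|\mu|=k}\tau(\langle x_\mu,x_\mu\rangle)$, with the convention that this is $0$ if the terms are eventually $0$. Irreducible components: the maximal strongly connected vertex classes, ordered so that $G$ is block upper triangular with irreducible diagonal blocks $G_1,\dots,G_m$ (a vertex on no cycle gives a component $[0]$). $\lambda_{G_s}$ is the spectral radius of $G_s$ ($0$ for $[0]$). $G_s$ is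 communicated by a vertex $v$ if there is a path (possibly of length $0$) starting at $v$ and ending at a vertex of $G_s$. Convention: $\log 0:=0$. *)

theory Defs
  imports "Jordan_Normal_Form.Spectral_Radius" "HOL-Library.Extended_Real"
begin

text \<open>Finite directed (multi)graph: vertices = the finite type 'v, edges = the subset E of the finite
  type 'e, source map src, range map rng.  A = C(G^(0)) is modelled as 'v => real
  (only self-adjoint elements occur); p_v is the indicator of v.\<close>

definition proj :: "'v \<Rightarrow> ('v \<Rightarrow> real)" where
  "proj v = (\<lambda>w. if w = v then 1 else 0)"

text \<open>Words mu = mu_k ... mu_1 are lists [mu_k, ..., mu_1] (head = outermost tensor
  factor).  xinner src rng mu is the A-valued inner product of x_mu with itself, computed
  by the interior tensor product rule <x (x) xi, x (x) xi> = <xi, <x,x> xi>, with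
  <x_e,x_f> = delta p_(s f) and p_v x_f = delta_(v, r f) x_f; x_[] = 1_A.\<close>

fun xinner :: "('e \<Rightarrow> 'v) \<Rightarrow> ('e \<Rightarrow> 'v) \<Rightarrow> 'e list \<Rightarrow> ('v \<Rightarrow> real)" where
  "xinner src rng [] = (\<lambda>_. 1)"
| "xinner src rng [e] = proj (src e)"
| "xinner src rng (e # f # nu) = (\<lambda>w. proj (src e) (rng f) * xinner src rng (f # nu) w)"

text \<open>Tracial state tau given by the probability vector t: tau(a) = sum_v t v * a v.\<close>

definition trace_st :: "('v::finite \<Rightarrow> real) \<Rightarrow> ('v \<Rightarrow> real) \<Rightarrow> real" where
  "trace_st t a = (\<Sum>v\<in>UNIV. t v * a v)"

definition tracial_vec :: "('v::finite \<Rightarrow> real) \<Rightarrow> bool" where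
  "tracial_vec t \<longleftrightarrow> (\<forall>v. 0 \<le> t v) \<and> (\<Sum>v\<in>UNIV. t v) = 1"

definition log0 :: "real \<Rightarrow> real" where
  "log0 x = (if x = 0 then 0 else ln x)"

definition path_sum :: "'e set \<Rightarrow> ('e::finite \<Rightarrow> 'v::finite) \<Rightarrow> ('e \<Rightarrow> 'v) \<Rightarrow> ('v \<Rightarrow> real) \<Rightarrow> nat \<Rightarrow> real" where
  "path_sum E src rng t k = (\<Sum>mu\<in>{mu :: 'e list. length mu = k \<and> set mu \<subseteq> E}. trace_st t (xinner src rng mu))"

definition entropy :: "'e set \<Rightarrow> ('e::finite \<Rightarrow> 'v::finite) \<Rightarrow> ('e \<Rightarrow> 'v) \<Rightarrow> ('v \<Rightarrow> real) \<Rightarrow> ereal" where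
  "entropy E src rng t =
     (if eventually (\<lambda>k. path_sum E src rng t k = 0) sequentially then 0
      else limsup (\<lambda>k. ereal (log0 (path_sum E src rng t k) / real k)))"

definition adj :: "'e set \<Rightarrow> ('e::finite \<Rightarrow> 'v) \<Rightarrow> ('e \<Rightarrow> 'v) \<Rightarrow> 'v \<Rightarrow> 'v \<Rightarrow> nat" where
  "adj E src rng u v = card {e\<in>E. src e = u \<and> rng e = v}"

definition reach :: "'e set \<Rightarrow> ('e \<Rightarrow> 'v) \<Rightarrow> ('e \<Rightarrow> 'v) \<Rightarrow> 'v \<Rightarrow> 'v \<Rightarrow> bool" where
  "reach E src rng u v \<longleftrightarrow> (u, v) \<in> {(src e, rng e) | e. e \<in> E}\<^sup>*"

text \<open>Irreducible components: maximal strongly connected vertex classes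
  (a vertex on no cycle gives a class whose diagonal block is [0]).\<close>
definition components :: "'e set \<Rightarrow> ('e \<Rightarrow> 'v) \<Rightarrow> ('e \<Rightarrow> 'v) \<Rightarrow> 'v set set" where
  "components E src rng = range (\<lambda>v. {w. reach E src rng v w \<and> reach E src rng w v})"

text \<open>Diagonal block G_C of the adjacency matrix (indices enumerated by some bijection
  from {0..<card C}; the spectral radius does not depend on the enumeration).\<close>
definition block_mat :: "'e set \<Rightarrow> ('e::finite \<Rightarrow> 'v) \<Rightarrow> ('e \<Rightarrow> 'v) \<Rightarrow> 'v set \<Rightarrow> complex mat" where
  "block_mat E src rng C =
     (let f = (SOME f. bij_betw f {..<card C} C)
      in mat (card C) (card C) (\<lambda>(i, j). of_nat (adj E src rng (f i) (f j))))"

definition lambda_comp :: "'e set \<Rightarrow> ('e::finite \<Rightarrow> 'v) \<Rightarrow> ('e \<Rightarrow> 'v) \<Rightarrow> 'v set \<Rightarrow> real" where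
  "lambda_comp E src rng C = spectral_radius (block_mat E src rng C)"

definition communicated :: "'e set \<Rightarrow> ('e \<Rightarrow> 'v) \<Rightarrow> ('e \<Rightarrow> 'v) \<Rightarrow> 'v \<Rightarrow> 'v set \<Rightarrow> bool" where
  "communicated E src rng v C \<longleftrightarrow> (\<exists>w\<in>C. reach E src rng v w)"

end

theory Submission
  imports Defs
begin


locale G =
  fixes E :: "'e::finite set" and src rng :: "'e \<Rightarrow> 'v::finite"
begin

fun W :: "nat \<Rightarrow> 'v \<Rightarrow> 'v \<Rightarrow> nat" where
  "W 0 u v = (if u = v then 1 else 0)"
| "W (Suc k) u w = (\<Sum>v\<in>UNIV. W k u v * adj E src rng v w)"

fun valid :: "'e list \<Rightarrow> bool" where
  "valid [] = True"
| "valid [e] = True"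
| "valid (e # f # nu) = (src e = rng f \<and> valid (f # nu))"

definition se :: "'e list \<Rightarrow> 'v \<Rightarrow> 'v \<Rightarrow> bool" where
  "se mu u w = (if mu = [] then u = w else valid mu \<and> src (last mu) = u \<and> rng (hd mu) = w)"

lemma se_Cons: "se (e # nu) u w \<longleftrightarrow> rng e = w \<and> se nu u (src e)"
  by (cases nu) (auto simp: se_def)

lemma xinner_eq: "xinner src rng mu w =
   (if mu = [] then 1 else if valid mu then proj (src (last mu)) w else 0)"
proof (induction mu rule: valid.induct)
  case 1
  then show ?case by simp
next
  case (2 e)
  then show ?case by simp
next
  case (3 e f nu)
  show ?case
    by (simp only: xinner.simps valid.simps 3 last_ConsR list.simps(3) if_False) (simp add: proj_def)
qed

lemma trace_xinner: "trace_st t (xinner src rng mu) = (\<Sum>u\<in>UNIV. \<Sum>w\<in>UNIV. t u * (if se mu u w then 1 else 0))"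
proof (cases "mu = []")
  case True
  then show ?thesis by (simp add: xinner_eq trace_st_def se_def if_distrib cong: if_cong)
next
  case False
  show ?thesis
  proof (cases "valid mu")
    case True
    have "(\<Sum>u\<in>UNIV. \<Sum>w\<in>UNIV. t u * (if se mu u w then 1 else 0))
        = (\<Sum>u\<in>UNIV. \<Sum>w\<in>UNIV. (if u = src (last mu) \<and> w = rng (hd mu) then t u else 0))"
      using False True by (intro sum.cong refl) (auto simp: se_def)
    also have "\<dots> = (\<Sum>u\<in>UNIV. (if u = src (last mu) then t u else 0))"
    proof (intro sum.cong refl)
      fix u
      show "(\<Sum>w\<in>UNIV. (if u = src (last mu) \<and> w = rng (hd mu) then t u else 0))
          = (if u = src (last mu) then t u else 0)"
        by (cases "u = src (last mu)") simp_all
    qed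
    also have "\<dots> = t (src (last mu))" by simp
    moreover have "trace_st t (xinner src rng mu) = t (src (last mu))"
    proof -
      have "\<And>v. t v * xinner src rng mu v = (if v = src (last mu) then t v else 0)"
        using False True by (simp add: xinner_eq proj_def)
      then show ?thesis by (simp add: trace_st_def)
    qed
    ultimately show ?thesis by simp
  next
    case f2: False
    then show ?thesis using False by (simp add: xinner_eq trace_st_def se_def)
  qed
qed

lemma card_paths: "card {mu. length mu = k \<and> set mu \<subseteq> E \<and> se mu u w} = W k u w"
proof (induction k arbitrary: w)
  case 0
  then show ?case by (auto simp: se_def)
next
  case (Suc k)
  let ?L = "\<lambda>v. {mu. length mu = k \<and> set mu \<subseteq> E \<and> se mu u v}"
  have fin: "finite (?L v)" for v
    by (rule finite_subset[OF _ finite_lists_length_eq[OF finite[of E], of k]]) auto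
  have eq: "{mu. length mu = Suc k \<and> set mu \<subseteq> E \<and> se mu u w}
      = (\<lambda>(e, nu). e # nu) ` (SIGMA e:{e\<in>E. rng e = w}. ?L (src e))" (is "?A = ?B")
  proof
    show "?A \<subseteq> ?B"
    proof
      fix mu assume mu: "mu \<in> ?A"
      then obtain e nu where mu_eq: "mu = e # nu" by (cases mu) auto
      have "(e, nu) \<in> (SIGMA e:{e\<in>E. rng e = w}. ?L (src e))"
        using mu unfolding mu_eq by (auto simp: se_Cons)
      then show "mu \<in> ?B" unfolding mu_eq by (rule rev_image_eqI) simp
    qed
    show "?B \<subseteq> ?A" by (auto simp: se_Cons)
  qed
  have "card {mu. length mu = Suc k \<and> set mu \<subseteq> E \<and> se mu u w}
      = card (SIGMA e:{e\<in>E. rng e = w}. ?L (src e))"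
    unfolding eq by (rule card_image) (auto simp: inj_on_def)
  also have "\<dots> = (\<Sum>e\<in>{e\<in>E. rng e = w}. W k u (src e))"
    using fin by (simp add: card_SigmaI Suc.IH)
  also have "\<dots> = (\<Sum>v\<in>UNIV. \<Sum>e\<in>{x. x \<in> {e\<in>E. rng e = w} \<and> src x = v}. W k u (src e))"
    by (rule sum.group[symmetric]) auto
  also have "\<dots> = (\<Sum>v\<in>UNIV. W k u v * adj E src rng v w)"
  proof (intro sum.cong refl)
    fix v
    have "{x. x \<in> {e\<in>E. rng e = w} \<and> src x = v} = {e\<in>E. src e = v \<and> rng e = w}" by auto
    then have "(\<Sum>e\<in>{x. x \<in> {e\<in>E. rng e = w} \<and> src x = v}. W k u (src e))
       = (\<Sum>e\<in>{e\<in>E. src e = v \<and> rng e = w}. W k u v)" by (intro sum.cong) auto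
    then show "(\<Sum>e\<in>{x. x \<in> {e\<in>E. rng e = w} \<and> src x = v}. W k u (src e)) = W k u v * adj E src rng v w"
      by (simp add: adj_def, blast)
  qed
  finally show ?case by simp
qed

lemma path_sum_W: "path_sum E src rng t k = (\<Sum>u\<in>UNIV. t u * (\<Sum>w\<in>UNIV. real (W k u w)))"
proof -
  let ?L = "{mu :: 'e list. length mu = k \<and> set mu \<subseteq> E}"
  have fin: "finite ?L"
    by (rule finite_subset[OF _ finite_lists_length_eq[OF finite[of E], of k]]) auto
  have "path_sum E src rng t k = (\<Sum>mu\<in>?L. \<Sum>u\<in>UNIV. \<Sum>w\<in>UNIV. t u * (if se mu u w then 1 else 0))"
    unfolding path_sum_def by (simp add: trace_xinner)
  also have "\<dots> = (\<Sum>u\<in>UNIV. \<Sum>w\<in>UNIV. t u * (\<Sum>mu\<in>?L. (if se mu u w then 1 else 0)))"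
    by (simp add: sum.swap[of _ ?L] sum_distrib_left)
  also have "\<dots> = (\<Sum>u\<in>UNIV. \<Sum>w\<in>UNIV. t u * real (W k u w))"
  proof (intro sum.cong refl)
    fix u w
    have "(\<Sum>mu\<in>?L. (if se mu u w then 1 else 0::real)) = real (card {mu\<in>?L. se mu u w})"
      using sum.inter_filter[OF fin, of "\<lambda>_. 1::real" "\<lambda>mu. se mu u w"] by simp
    also have "{mu\<in>?L. se mu u w} = {mu. length mu = k \<and> set mu \<subseteq> E \<and> se mu u w}" by auto
    finally show "t u * (\<Sum>mu\<in>?L. (if se mu u w then 1 else 0)) = t u * real (W k u w)"
      by (simp add: card_paths)
  qed
  finally show ?thesis by (simp add: sum_distrib_left)
qed

lemma adj_pos_edge: "adj E src rng v w > 0 \<Longrightarrow> \<exists>e\<in>E. src e = v \<and> rng e = w"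
  unfolding adj_def by (auto simp: card_gt_0_iff)

lemma adj_pos_reach: "adj E src rng v w > 0 \<Longrightarrow> reach E src rng v w"
  using adj_pos_edge unfolding reach_def by blast

lemma edge_adj_pos: "e \<in> E \<Longrightarrow> adj E src rng (src e) (rng e) > 0"
  unfolding adj_def by (subst card_gt_0_iff) auto

lemma reach_trans: "reach E src rng a b \<Longrightarrow> reach E src rng b c \<Longrightarrow> reach E src rng a c"
  unfolding reach_def by (rule rtrancl_trans)

lemma reach_refl: "reach E src rng a a"
  unfolding reach_def by simp

lemma W_pos_reach: "W k u v > 0 \<Longrightarrow> reach E src rng u v"
proof (induction k arbitrary: v)
  case 0
  then show ?case by (simp add: reach_refl split: if_splits)
next
  case (Suc k)
  have "\<not> (\<forall>y. W k u y * adj E src rng y v = 0)"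
  proof
    assume "\<forall>y. W k u y * adj E src rng y v = 0"
    then have "W (Suc k) u v = 0" by simp
    with Suc.prems show False by simp
  qed
  then obtain y where "W k u y * adj E src rng y v \<noteq> 0" by blast
  then have "W k u y > 0" "adj E src rng y v > 0" by auto
  then show ?case using Suc.IH adj_pos_reach reach_trans by blast
qed

lemma W_Suc_ge: "W k u y * adj E src rng y z \<le> W (Suc k) u z"
  unfolding W.simps by (rule member_le_sum[of y]) auto

lemma reach_W: "reach E src rng u v \<Longrightarrow> \<exists>k. W k u v > 0"
  unfolding reach_def
proof (induction rule: rtrancl_induct)
  case base
  then show ?case by (intro exI[of _ 0]) simp
next
  case (step y z)
  then obtain k where k: "W k u y > 0" by blast
  from step(2) obtain e where e: "e \<in> E" "y = src e" "z = rng e" by blast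
  have "W k u y * adj E src rng y z > 0" using k edge_adj_pos[OF e(1)] e by simp
  then have "W (Suc k) u z > 0" using W_Suc_ge[of k u y z] by linarith
  then show ?case by blast
qed

lemma W_add: "W (a + b) u w = (\<Sum>v\<in>UNIV. W a u v * W b v w)"
proof (induction b arbitrary: w)
  case 0
  have "(\<Sum>v\<in>UNIV. W a u v * W 0 v w) = (\<Sum>v\<in>UNIV. if v = w then W a u w else 0)"
    by (intro sum.cong) auto
  then show ?case by simp
next
  case (Suc b)
  have "W (a + Suc b) u w = (\<Sum>y\<in>UNIV. W (a + b) u y * adj E src rng y w)" by simp
  also have "\<dots> = (\<Sum>y\<in>UNIV. \<Sum>v\<in>UNIV. W a u v * W b v y * adj E src rng y w)"
    by (simp add: Suc.IH sum_distrib_right)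
  also have "\<dots> = (\<Sum>v\<in>UNIV. W a u v * (\<Sum>y\<in>UNIV. W b v y * adj E src rng y w))"
    by (subst sum.swap) (simp add: sum_distrib_left mult.assoc)
  finally show ?case by simp
qed

lemma W_one: "W 1 u y = adj E src rng u y"
proof -
  have "(\<Sum>v\<in>UNIV. W 0 u v * adj E src rng v y) = (\<Sum>v\<in>UNIV. if v = u then adj E src rng u y else 0)"
    by (intro sum.cong) auto
  then show ?thesis by simp
qed

lemma W_Suc_first: "W (Suc k) u w = (\<Sum>y\<in>UNIV. adj E src rng u y * W k y w)"
proof -
  have "W (Suc k) u w = W (1 + k) u w" by simp
  also have "\<dots> = (\<Sum>v\<in>UNIV. W 1 u v * W k v w)" by (rule W_add)
  also have "\<dots> = (\<Sum>y\<in>UNIV. adj E src rng u y * W k y w)" by (simp only: W_one)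
  finally show ?thesis .
qed

lemma components_form: "C \<in> components E src rng \<Longrightarrow>
   \<exists>x. C = {w. reach E src rng x w \<and> reach E src rng w x}"
  unfolding components_def by auto

lemma comp_closed:
  assumes C: "C \<in> components E src rng" and a: "a \<in> C" and b: "b \<in> C"
    and ab: "reach E src rng a v" "reach E src rng v b"
  shows "v \<in> C"
proof -
  obtain x where x: "C = {w. reach E src rng x w \<and> reach E src rng w x}"
    using components_form[OF C] by blast
  show ?thesis using a b ab reach_trans unfolding x by blast
qed

lemma comp_nonempty: "C \<in> components E src rng \<Longrightarrow> C \<noteq> {}"
  unfolding components_def using reach_refl by blast



lemma matpow_W:
  fixes c :: complex
  assumes C: "C \<in> components E src rng" and f: "bij_betw f {..<card C} C"
    and i: "i < card C" and j: "j < card C"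
  shows "(mat (card C) (card C) (\<lambda>(i,j). c * of_nat (adj E src rng (f i) (f j))) ^\<^sub>m k) $$ (i,j)
     = c^k * of_nat (W k (f i) (f j))"
  using j
proof (induction k arbitrary: j)
  case 0
  have "f i = f j \<longleftrightarrow> i = j"
    using bij_betw_imp_inj_on[OF f] i 0 by (auto simp: inj_on_eq_iff)
  then show ?case using i 0 by simp
next
  case (Suc k)
  let ?n = "card C"
  let ?M = "mat ?n ?n (\<lambda>(i,j). c * of_nat (adj E src rng (f i) (f j)))"
  have M: "?M \<in> carrier_mat ?n ?n" by simp
  have P: "?M ^\<^sub>m k \<in> carrier_mat ?n ?n" by simp
  have "(?M ^\<^sub>m Suc k) $$ (i,j) = (?M ^\<^sub>m k * ?M) $$ (i, j)" by simp
  also have "\<dots> = (\<Sum>l\<in>{0..<?n}. (?M ^\<^sub>m k) $$ (i,l) * ?M $$ (l,j))"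
    using P M i Suc.prems by (simp add: scalar_prod_def)
  also have "\<dots> = (\<Sum>l\<in>{..<?n}. c^Suc k * of_nat (W k (f i) (f l) * adj E src rng (f l) (f j)))"
    using Suc.IH Suc.prems by (intro sum.cong) (auto simp: lessThan_atLeast0)
  also have "\<dots> = c^Suc k * of_nat (\<Sum>l\<in>{..<?n}. W k (f i) (f l) * adj E src rng (f l) (f j))"
    by (simp add: sum_distrib_left)
  also have "(\<Sum>l\<in>{..<?n}. W k (f i) (f l) * adj E src rng (f l) (f j))
      = (\<Sum>v\<in>C. W k (f i) v * adj E src rng v (f j))"
    by (rule sum.reindex_bij_betw[OF f])
  also have "\<dots> = (\<Sum>v\<in>UNIV. W k (f i) v * adj E src rng v (f j))"
  proof (rule sum.mono_neutral_left)
    show "\<forall>v\<in>UNIV - C. W k (f i) v * adj E src rng v (f j) = 0"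
    proof
      fix v assume v: "v \<in> UNIV - C"
      show "W k (f i) v * adj E src rng v (f j) = 0"
      proof (rule ccontr)
        assume "W k (f i) v * adj E src rng v (f j) \<noteq> 0"
        then have "reach E src rng (f i) v" "reach E src rng v (f j)"
          using W_pos_reach adj_pos_reach by auto
        moreover have "f i \<in> C" "f j \<in> C" using f i Suc.prems bij_betwE by blast+
        ultimately have "v \<in> C" using comp_closed[OF C] by blast
        then show False using v by blast
      qed
    qed
  qed auto
  finally show ?case by simp
qed



definition enum :: "'v set \<Rightarrow> nat \<Rightarrow> 'v" where
  "enum C = (SOME f. bij_betw f {..<card C} C)"

lemma enum_bij: "bij_betw (enum C) {..<card C} C"
proof -
  have "\<exists>f. bij_betw f {..<card C} C"
    using ex_bij_betw_nat_finite[of C] by (simp add: atLeast0LessThan)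
  then show ?thesis unfolding enum_def by (rule someI_ex)
qed

lemma block_eq: "block_mat E src rng C =
   mat (card C) (card C) (\<lambda>(i,j). 1 * of_nat (adj E src rng (enum C i) (enum C j)))"
  unfolding block_mat_def enum_def Let_def by simp

lemma comp_card_pos: "C \<in> components E src rng \<Longrightarrow> card C > 0"
  using comp_nonempty by (simp add: card_gt_0_iff)

lemma block_pow:
  assumes C: "C \<in> components E src rng" and i: "i < card C" and j: "j < card C"
  shows "(block_mat E src rng C ^\<^sub>m k) $$ (i,j) = of_nat (W k (enum C i) (enum C j))"
  unfolding block_eq using matpow_W[OF C enum_bij i j, of 1 k] by simp

lemma lower_bound:
  assumes C: "C \<in> components E src rng"
  shows "\<exists>a\<in>C. lambda_comp E src rng C ^ k \<le> (\<Sum>b\<in>C. real (W k a b))"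
proof -
  let ?n = "card C"
  let ?f = "enum C"
  let ?A = "block_mat E src rng C"
  have n: "?n > 0" using comp_card_pos[OF C] .
  have A: "?A \<in> carrier_mat ?n ?n" unfolding block_eq by simp
  from spectral_radius_mem_max(1)[OF A n] obtain \<alpha> where
    \<alpha>: "\<alpha> \<in> spectrum ?A" and n\<alpha>: "norm \<alpha> = spectral_radius ?A" by auto
  from \<alpha> obtain v where ev: "eigenvector ?A v \<alpha>"
    unfolding spectrum_def eigenvalue_def by auto
  have dimA: "dim_row ?A = ?n" using A by simp
  have v: "v \<in> carrier_vec ?n" and v0: "v \<noteq> 0\<^sub>v ?n"
    using ev unfolding eigenvector_def dimA by auto
  have pow: "?A ^\<^sub>m k *\<^sub>v v = \<alpha>^k \<cdot>\<^sub>v v" by (rule eigenvector_pow[OF A ev])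
  define m where "m = Max ((\<lambda>j. norm (v $ j)) ` {..<?n})"
  have "m \<in> (\<lambda>j. norm (v $ j)) ` {..<?n}" unfolding m_def using n by (intro Max_in) auto
  then obtain i where i: "i < ?n" and mi: "m = norm (v $ i)" by auto
  have mge: "norm (v $ j) \<le> norm (v $ i)" if "j < ?n" for j
    unfolding mi[symmetric] m_def using that by (intro Max_ge) auto
  have "\<exists>j<?n. v $ j \<noteq> 0"
  proof (rule ccontr)
    assume "\<not> ?thesis"
    then have "v = 0\<^sub>v ?n" using v by (intro eq_vecI) auto
    with v0 show False by simp
  qed
  then obtain j0 where "j0 < ?n" "v $ j0 \<noteq> 0" by auto
  then have vi: "norm (v $ i) > 0" using mge[of j0] by auto
  have Ak: "?A ^\<^sub>m k \<in> carrier_mat ?n ?n" using A by simp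
  have "\<alpha>^k * v $ i = (?A ^\<^sub>m k *\<^sub>v v) $ i" using pow i v by simp
  also have "\<dots> = row (?A ^\<^sub>m k) i \<bullet> v" using Ak i by (intro index_mult_mat_vec) auto
  also have "\<dots> = (\<Sum>j\<in>{0..<?n}. (?A ^\<^sub>m k) $$ (i,j) * v $ j)"
  proof -
    have dv: "dim_vec v = ?n" using v by simp
    have dr: "dim_row (?A ^\<^sub>m k) = ?n" "dim_col (?A ^\<^sub>m k) = ?n" using Ak by auto
    show ?thesis unfolding scalar_prod_def dv using dr i by (intro sum.cong) auto
  qed
  finally have eq: "\<alpha>^k * v $ i = (\<Sum>j\<in>{0..<?n}. (?A ^\<^sub>m k) $$ (i,j) * v $ j)" .
  have "spectral_radius ?A ^ k * norm (v $ i) = norm (\<alpha>^k * v $ i)"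
    by (simp add: norm_mult norm_power n\<alpha>)
  also have "\<dots> \<le> (\<Sum>j\<in>{0..<?n}. norm ((?A ^\<^sub>m k) $$ (i,j) * v $ j))"
    unfolding eq by (rule norm_sum)
  also have "\<dots> \<le> (\<Sum>j\<in>{0..<?n}. real (W k (?f i) (?f j)) * norm (v $ i))"
  proof (rule sum_mono)
    fix j assume j: "j \<in> {0..<?n}"
    have "norm ((?A ^\<^sub>m k) $$ (i,j) * v $ j) = real (W k (?f i) (?f j)) * norm (v $ j)"
      using block_pow[OF C i, of j k] j by (simp add: norm_mult)
    also have "\<dots> \<le> real (W k (?f i) (?f j)) * norm (v $ i)"
      using mge[of j] j by (intro mult_left_mono) auto
    finally show "norm ((?A ^\<^sub>m k) $$ (i,j) * v $ j) \<le> real (W k (?f i) (?f j)) * norm (v $ i)" .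
  qed
  also have "\<dots> = (\<Sum>j\<in>{..<?n}. real (W k (?f i) (?f j))) * norm (v $ i)"
    by (simp add: sum_distrib_right atLeast0LessThan)
  finally have "spectral_radius ?A ^ k \<le> (\<Sum>j\<in>{..<?n}. real (W k (?f i) (?f j)))"
    using vi by simp
  also have "(\<Sum>j\<in>{..<?n}. real (W k (?f i) (?f j))) = (\<Sum>b\<in>C. real (W k (?f i) b))"
    by (rule sum.reindex_bij_betw[OF enum_bij])
  finally have "lambda_comp E src rng C ^ k \<le> (\<Sum>b\<in>C. real (W k (?f i) b))"
    unfolding lambda_comp_def .
  moreover have "?f i \<in> C" using enum_bij[of C] i bij_betwE by blast
  ultimately show ?thesis by blast
qed

lemma upper_bound:
  assumes C: "C \<in> components E src rng" and lam: "lambda_comp E src rng C \<le> \<mu>" and mu: "\<mu> > 0"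
  shows "\<exists>c d. \<forall>k. \<forall>a\<in>C. \<forall>b\<in>C. real (W k a b) \<le> c * (real k + 1)^d * \<mu>^k"
proof -
  let ?n = "card C"
  let ?f = "enum C"
  let ?A = "block_mat E src rng C"
  let ?c = "complex_of_real (1/\<mu>)"
  define B where "B = mat ?n ?n (\<lambda>(i,j). ?c * of_nat (adj E src rng (?f i) (?f j)))"
  have n: "?n > 0" using comp_card_pos[OF C] .
  have A: "?A \<in> carrier_mat ?n ?n" unfolding block_eq by simp
  have Bc: "B \<in> carrier_mat ?n ?n" unfolding B_def by simp
  have AB: "?A $$ (i,j) = complex_of_real \<mu> * B $$ (i,j)" if "i < ?n" "j < ?n" for i j
    using that mu unfolding B_def block_eq by simp
  have "spectral_radius B \<le> 1"
  proof -
    from spectral_radius_mem_max(1)[OF Bc n] obtain \<kappa> where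
      \<kappa>: "\<kappa> \<in> spectrum B" and n\<kappa>: "norm \<kappa> = spectral_radius B" by auto
    from \<kappa> obtain v where ev: "eigenvector B v \<kappa>"
      unfolding spectrum_def eigenvalue_def by auto
    have dimB: "dim_row B = ?n" using Bc by simp
    have v: "v \<in> carrier_vec ?n" and v0: "v \<noteq> 0\<^sub>v ?n" and Bv: "B *\<^sub>v v = \<kappa> \<cdot>\<^sub>v v"
      using ev unfolding eigenvector_def dimB by auto
    have dv: "dim_vec v = ?n" using v by simp
    have "?A *\<^sub>v v = (complex_of_real \<mu> * \<kappa>) \<cdot>\<^sub>v v"
    proof (rule eq_vecI)
      fix i assume "i < dim_vec ((complex_of_real \<mu> * \<kappa>) \<cdot>\<^sub>v v)"
      then have i: "i < ?n" using dv by simp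
      have "(?A *\<^sub>v v) $ i = (\<Sum>j\<in>{0..<?n}. ?A $$ (i,j) * v $ j)"
        using A i dv by (simp add: scalar_prod_def)
      also have "\<dots> = complex_of_real \<mu> * (\<Sum>j\<in>{0..<?n}. B $$ (i,j) * v $ j)"
        using i by (simp add: AB sum_distrib_left mult.assoc)
      also have "(\<Sum>j\<in>{0..<?n}. B $$ (i,j) * v $ j) = (B *\<^sub>v v) $ i"
        using Bc i dv by (simp add: scalar_prod_def)
      also have "\<dots> = \<kappa> * v $ i" using Bv i dv by simp
      finally show "(?A *\<^sub>v v) $ i = ((complex_of_real \<mu> * \<kappa>) \<cdot>\<^sub>v v) $ i"
        using i dv by simp
    qed (use A dv in simp)
    then have "eigenvector ?A v (complex_of_real \<mu> * \<kappa>)"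
      unfolding eigenvector_def using A v v0 by simp
    then have "complex_of_real \<mu> * \<kappa> \<in> spectrum ?A"
      unfolding spectrum_def eigenvalue_def by auto
    then have "norm (complex_of_real \<mu> * \<kappa>) \<le> spectral_radius ?A"
      using spectral_radius_mem_max(2)[OF A n] by auto
    moreover have "norm (complex_of_real \<mu> * \<kappa>) = \<mu> * norm \<kappa>" using mu by (simp add: norm_mult)
    ultimately have "\<mu> * norm \<kappa> \<le> \<mu> * 1" using lam unfolding lambda_comp_def by linarith
    then have "norm \<kappa> \<le> 1" using mu by (simp only: mult_le_cancel_left_pos)
    then show ?thesis using n\<kappa> by simp
  qed
  from spectral_radius_jnf_norm_bound_le_1_upper_triangular[OF Bc this]
  obtain c1 c2 where cb: "\<And>k. norm_bound (B ^\<^sub>m k) (c1 + c2 * of_nat k ^ (?n - 1))" by blast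
  show ?thesis
  proof (intro exI allI ballI)
    fix k a b assume a: "a \<in> C" and b: "b \<in> C"
    obtain i where i: "i < ?n" "a = ?f i" using a enum_bij[of C]
      by (metis bij_betw_iff_bijections lessThan_iff)
    obtain j where j: "j < ?n" "b = ?f j" using b enum_bij[of C]
      by (metis bij_betw_iff_bijections lessThan_iff)
    have Bk: "B ^\<^sub>m k \<in> carrier_mat ?n ?n" using Bc by simp
    have "(B ^\<^sub>m k) $$ (i,j) = ?c ^ k * of_nat (W k a b)"
      unfolding B_def i j by (rule matpow_W[OF C enum_bij i(1) j(1)])
    then have eqn: "norm ((B ^\<^sub>m k) $$ (i,j)) = real (W k a b) / \<mu>^k"
      using mu by (simp add: norm_mult norm_power power_one_over norm_divide)
    have nb: "norm ((B ^\<^sub>m k) $$ (i,j)) \<le> c1 + c2 * real k ^ (?n - 1)"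
    proof -
      have dims: "dim_row (B ^\<^sub>m k) = ?n" "dim_col (B ^\<^sub>m k) = ?n" using Bk by auto
      show ?thesis using cb[of k] unfolding norm_bound_def using i(1) j(1) dims by simp
    qed
    have "real (W k a b) / \<mu>^k \<le> c1 + c2 * real k ^ (?n - 1)" using eqn nb by simp
    also have "\<dots> \<le> (\<bar>c1\<bar> + \<bar>c2\<bar>) * (real k + 1) ^ (?n - 1)"
    proof -
      have p1: "1 \<le> (real k + 1) ^ (?n - 1)" by simp
      have p2: "real k ^ (?n - 1) \<le> (real k + 1) ^ (?n - 1)" by (intro power_mono) auto
      have "c1 \<le> \<bar>c1\<bar> * (real k + 1) ^ (?n - 1)"
        using p1 by (metis abs_ge_self abs_ge_zero mult.right_neutral mult_left_mono order_trans)
      moreover have "c2 * real k ^ (?n - 1) \<le> \<bar>c2\<bar> * (real k + 1) ^ (?n - 1)"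
      proof -
        have "c2 * real k ^ (?n - 1) \<le> \<bar>c2\<bar> * real k ^ (?n - 1)"
          by (intro mult_right_mono) auto
        also have "\<dots> \<le> \<bar>c2\<bar> * (real k + 1) ^ (?n - 1)"
          using p2 by (intro mult_left_mono) auto
        finally show ?thesis .
      qed
      ultimately show ?thesis by (simp add: distrib_right)
    qed
    finally show "real (W k a b) \<le> (\<bar>c1\<bar> + \<bar>c2\<bar>) * (real k + 1) ^ (?n - 1) * \<mu>^k"
      using mu by (simp add: divide_le_eq mult.commute mult.left_commute)
  qed
qed

end


definition PB :: "real \<Rightarrow> (nat \<Rightarrow> real) \<Rightarrow> bool" where
  "PB \<mu> g \<longleftrightarrow> (\<exists>c d. \<forall>k. \<bar>g k\<bar> \<le> c * (real k + 1)^d * \<mu>^k)"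

lemma PB_mono:
  assumes "\<And>k. \<bar>f k\<bar> \<le> \<bar>g k\<bar>" "PB \<mu> g" shows "PB \<mu> f"
  using assms unfolding PB_def by (meson order_trans)

lemma PB_zero: "PB \<mu> (\<lambda>k. 0)"
  unfolding PB_def by (intro exI[of _ 0]) simp

lemma PB_cmult: assumes "PB \<mu> g" shows "PB \<mu> (\<lambda>k. a * g k)"
proof -
  from assms obtain c d where cd: "\<And>k. \<bar>g k\<bar> \<le> c * (real k + 1)^d * \<mu>^k" unfolding PB_def by blast
  have "\<bar>a * g k\<bar> \<le> (\<bar>a\<bar> * c) * (real k + 1)^d * \<mu>^k" for k
    using mult_left_mono[OF cd[of k], of "\<bar>a\<bar>"] by (simp add: abs_mult mult.assoc)
  then show ?thesis unfolding PB_def by blast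
qed

lemma PB_add:
  assumes mu: "\<mu> > 0" and f: "PB \<mu> f" and g: "PB \<mu> g"
  shows "PB \<mu> (\<lambda>k. f k + g k)"
proof -
  from f obtain c1 d1 where c1: "\<And>k. \<bar>f k\<bar> \<le> c1 * (real k + 1)^d1 * \<mu>^k" unfolding PB_def by blast
  from g obtain c2 d2 where c2: "\<And>k. \<bar>g k\<bar> \<le> c2 * (real k + 1)^d2 * \<mu>^k" unfolding PB_def by blast
  have c1p: "c1 \<ge> 0" using c1[of 0] by simp
  have c2p: "c2 \<ge> 0" using c2[of 0] by simp
  have "\<bar>f k + g k\<bar> \<le> (c1 + c2) * (real k + 1)^(d1+d2) * \<mu>^k" for k
  proof -
    have m: "\<mu>^k > 0" using mu by simp
    have p1: "(real k + 1)^d1 \<le> (real k + 1)^(d1+d2)" by (intro power_increasing) auto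
    have p2: "(real k + 1)^d2 \<le> (real k + 1)^(d1+d2)" by (intro power_increasing) auto
    have "c1 * (real k + 1)^d1 * \<mu>^k \<le> c1 * (real k + 1)^(d1+d2) * \<mu>^k"
      using p1 c1p m by (intro mult_right_mono mult_left_mono) auto
    moreover have "c2 * (real k + 1)^d2 * \<mu>^k \<le> c2 * (real k + 1)^(d1+d2) * \<mu>^k"
      using p2 c2p m by (intro mult_right_mono mult_left_mono) auto
    ultimately show ?thesis using c1[of k] c2[of k] abs_triangle_ineq[of "f k" "g k"]
      by (simp add: distrib_right)
  qed
  then show ?thesis unfolding PB_def by blast
qed

lemma PB_sum:
  assumes mu: "\<mu> > 0" and A: "finite A" and g: "\<And>x. x \<in> A \<Longrightarrow> PB \<mu> (g x)"
  shows "PB \<mu> (\<lambda>k. \<Sum>x\<in>A. g x k)"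
  using A g
proof (induction A rule: finite_induct)
  case empty
  then show ?case by (simp add: PB_zero)
next
  case (insert x F)
  then show ?case using PB_add[OF mu, of "g x" "\<lambda>k. \<Sum>x\<in>F. g x k"] by simp
qed

lemma PB_conv:
  assumes mu: "\<mu> > 0" and f: "PB \<mu> f" and g: "PB \<mu> g"
  shows "PB \<mu> (\<lambda>k. \<Sum>j<k. f (k - 1 - j) * g j)"
proof -
  from f obtain c1 d1 where c1: "\<And>k. \<bar>f k\<bar> \<le> c1 * (real k + 1)^d1 * \<mu>^k" unfolding PB_def by blast
  from g obtain c2 d2 where c2: "\<And>k. \<bar>g k\<bar> \<le> c2 * (real k + 1)^d2 * \<mu>^k" unfolding PB_def by blast
  have c1p: "c1 \<ge> 0" using c1[of 0] by simp
  have c2p: "c2 \<ge> 0" using c2[of 0] by simp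
  have "\<bar>\<Sum>j<k. f (k - 1 - j) * g j\<bar> \<le> (c1 * c2 / \<mu>) * (real k + 1)^(d1+d2+1) * \<mu>^k" for k
  proof -
    have "\<bar>\<Sum>j<k. f (k - 1 - j) * g j\<bar> \<le> (\<Sum>j<k. \<bar>f (k - 1 - j)\<bar> * \<bar>g j\<bar>)"
      by (rule order_trans[OF sum_abs]) (simp add: abs_mult)
    also have "\<dots> \<le> (\<Sum>j<k. (c1 * c2) * (real k + 1)^(d1+d2) * \<mu>^(k-1))"
    proof (rule sum_mono)
      fix j assume j: "j \<in> {..<k}"
      have e: "\<mu>^(k-1-j) * \<mu>^j = \<mu>^(k-1)" using j by (simp add: power_add[symmetric])
      have q1: "(real (k-1-j) + 1)^d1 \<le> (real k + 1)^d1" using j by (intro power_mono) auto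
      have q2: "(real j + 1)^d2 \<le> (real k + 1)^d2" using j by (intro power_mono) auto
      have "\<bar>f (k - 1 - j)\<bar> * \<bar>g j\<bar> \<le> (c1 * (real (k-1-j) + 1)^d1 * \<mu>^(k-1-j)) * (c2 * (real j + 1)^d2 * \<mu>^j)"
        using c1[of "k-1-j"] c2[of j] by (intro mult_mono) auto
      also have "\<dots> = (c1 * c2) * ((real (k-1-j) + 1)^d1 * (real j + 1)^d2) * (\<mu>^(k-1-j) * \<mu>^j)"
        by (simp add: algebra_simps)
      also have "\<dots> \<le> (c1 * c2) * ((real k + 1)^d1 * (real k + 1)^d2) * (\<mu>^(k-1-j) * \<mu>^j)"
        using q1 q2 c1p c2p mu by (intro mult_right_mono mult_left_mono mult_mono) auto
      also have "\<dots> = (c1 * c2) * (real k + 1)^(d1+d2) * \<mu>^(k-1)"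
        unfolding e by (simp add: power_add)
      finally show "\<bar>f (k - 1 - j)\<bar> * \<bar>g j\<bar> \<le> (c1 * c2) * (real k + 1)^(d1+d2) * \<mu>^(k-1)" .
    qed
    also have "\<dots> = real k * ((c1 * c2) * (real k + 1)^(d1+d2) * \<mu>^(k-1))" by simp
    also have "\<dots> \<le> (c1 * c2 / \<mu>) * (real k + 1)^(d1+d2+1) * \<mu>^k"
    proof (cases k)
      case 0
      then show ?thesis using c1p c2p mu by simp
    next
      case (Suc m)
      have "real k * ((c1 * c2) * (real k + 1)^(d1+d2) * \<mu>^(k-1))
          \<le> (real k + 1) * ((c1 * c2) * (real k + 1)^(d1+d2) * \<mu>^(k-1))"
        using c1p c2p mu by (intro mult_right_mono) auto
      also have "\<dots> = (c1 * c2 / \<mu>) * (real k + 1)^(d1+d2+1) * \<mu>^k"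
        using mu Suc by (simp add: field_simps)
      finally show ?thesis .
    qed
    finally show ?thesis .
  qed
  then show ?thesis unfolding PB_def by blast
qed

context G begin

definition out :: "nat \<Rightarrow> 'v \<Rightarrow> real" where
  "out k u = (\<Sum>w\<in>UNIV. real (W k u w))"

definition Gs :: "'v set \<Rightarrow> nat \<Rightarrow> 'v \<Rightarrow> real" where
  "Gs C j b = (\<Sum>y\<in>-C. real (adj E src rng b y) * out j y)"

lemma out_nonneg: "out k u \<ge> 0" unfolding out_def by (simp add: sum_nonneg)

lemma Gs_nonneg: "Gs C j b \<ge> 0" unfolding Gs_def by (simp add: sum_nonneg out_nonneg)

lemma Wr_Suc_first: "real (W (Suc k) u w) = (\<Sum>y\<in>UNIV. real (adj E src rng u y) * real (W k y w))"
  by (simp only: W_Suc_first of_nat_sum of_nat_mult)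

lemma W_Suc_restrict: "(\<Sum>y\<in>C. real (adj E src rng a y) * real (W m y b)) \<le> real (W (Suc m) a b)"
  unfolding Wr_Suc_first by (rule sum_mono2) auto

lemma out_Suc: "out (Suc k) a = (\<Sum>y\<in>UNIV. real (adj E src rng a y) * out k y)"
  unfolding out_def Wr_Suc_first sum_distrib_left by (rule sum.swap)

lemma decomp:
  assumes "a \<in> C"
  shows "out k a \<le> (\<Sum>b\<in>C. real (W k a b)) + (\<Sum>j<k. \<Sum>b\<in>C. real (W (k-1-j) a b) * Gs C j b)"
  using assms
proof (induction k arbitrary: a)
  case 0
  have "out 0 a = (\<Sum>w\<in>UNIV. if w = a then 1 else 0)" unfolding out_def by (intro sum.cong) auto
  then have "out 0 a = 1" by simp
  moreover have "(\<Sum>b\<in>C. real (W 0 a b)) = (\<Sum>b\<in>C. if b = a then 1 else 0)" by (intro sum.cong) auto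
  then have "(\<Sum>b\<in>C. real (W 0 a b)) = 1" using 0 by simp
  ultimately show ?case by simp
next
  case (Suc k)
  let ?adj = "\<lambda>a y. real (adj E src rng a y)"
  have split: "(\<Sum>y\<in>UNIV. ?adj a y * out k y) = (\<Sum>y\<in>C. ?adj a y * out k y) + Gs C k a"
    unfolding Gs_def
    using sum.subset_diff[of C UNIV "\<lambda>y. ?adj a y * out k y"] by (simp add: Compl_eq_Diff_UNIV)
  have "(\<Sum>y\<in>C. ?adj a y * out k y) \<le> (\<Sum>y\<in>C. ?adj a y *
      ((\<Sum>b\<in>C. real (W k y b)) + (\<Sum>j<k. \<Sum>b\<in>C. real (W (k-1-j) y b) * Gs C j b)))"
    using Suc.IH by (intro sum_mono mult_left_mono) auto
  also have "\<dots> = (\<Sum>b\<in>C. \<Sum>y\<in>C. ?adj a y * real (W k y b))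
      + (\<Sum>j<k. \<Sum>b\<in>C. (\<Sum>y\<in>C. ?adj a y * real (W (k-1-j) y b)) * Gs C j b)"
  proof -
    have e1: "(\<Sum>y\<in>C. ?adj a y * (\<Sum>b\<in>C. real (W k y b))) = (\<Sum>b\<in>C. \<Sum>y\<in>C. ?adj a y * real (W k y b))"
      unfolding sum_distrib_left by (rule sum.swap)
    have "(\<Sum>y\<in>C. ?adj a y * (\<Sum>j<k. \<Sum>b\<in>C. real (W (k-1-j) y b) * Gs C j b))
        = (\<Sum>y\<in>C. \<Sum>j<k. \<Sum>b\<in>C. ?adj a y * (real (W (k-1-j) y b) * Gs C j b))"
      by (simp only: sum_distrib_left)
    also have "\<dots> = (\<Sum>j<k. \<Sum>y\<in>C. \<Sum>b\<in>C. ?adj a y * (real (W (k-1-j) y b) * Gs C j b))"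
      by (rule sum.swap)
    also have "\<dots> = (\<Sum>j<k. \<Sum>b\<in>C. \<Sum>y\<in>C. ?adj a y * (real (W (k-1-j) y b) * Gs C j b))"
      by (rule sum.cong[OF refl], rule sum.swap)
    also have "\<dots> = (\<Sum>j<k. \<Sum>b\<in>C. (\<Sum>y\<in>C. ?adj a y * real (W (k-1-j) y b)) * Gs C j b)"
      by (simp only: sum_distrib_right mult.assoc)
    finally have e2: "(\<Sum>y\<in>C. ?adj a y * (\<Sum>j<k. \<Sum>b\<in>C. real (W (k-1-j) y b) * Gs C j b))
        = (\<Sum>j<k. \<Sum>b\<in>C. (\<Sum>y\<in>C. ?adj a y * real (W (k-1-j) y b)) * Gs C j b)" .
    show ?thesis by (simp only: distrib_left sum.distrib e1 e2)
  qed
  also have "\<dots> \<le> (\<Sum>b\<in>C. real (W (Suc k) a b))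
      + (\<Sum>j<k. \<Sum>b\<in>C. real (W (k-j) a b) * Gs C j b)"
  proof (intro add_mono sum_mono mult_right_mono)
    fix j b assume j: "j \<in> {..<k}"
    have "Suc (k-1-j) = k - j" using j by auto
    then show "(\<Sum>y\<in>C. ?adj a y * real (W (k-1-j) y b)) \<le> real (W (k-j) a b)"
      using W_Suc_restrict[where C=C and a=a and m="k-1-j" and b=b] by simp
  qed (auto simp del: W.simps(2) intro: W_Suc_restrict Gs_nonneg)
  finally have le: "(\<Sum>y\<in>C. ?adj a y * out k y) \<le> (\<Sum>b\<in>C. real (W (Suc k) a b))
      + (\<Sum>j<k. \<Sum>b\<in>C. real (W (k-j) a b) * Gs C j b)" .
  have last: "(\<Sum>b\<in>C. real (W 0 a b) * Gs C k b) = Gs C k a"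
  proof -
    have "(\<Sum>b\<in>C. real (W 0 a b) * Gs C k b) = (\<Sum>b\<in>C. if b = a then Gs C k a else 0)"
      by (intro sum.cong) auto
    then show ?thesis using Suc.prems by simp
  qed
  have "out (Suc k) a \<le> (\<Sum>b\<in>C. real (W (Suc k) a b))
      + (\<Sum>j<k. \<Sum>b\<in>C. real (W (k-j) a b) * Gs C j b) + Gs C k a"
    using le split out_Suc[of k a] by linarith
  also have "\<dots> = (\<Sum>b\<in>C. real (W (Suc k) a b))
      + (\<Sum>j<Suc k. \<Sum>b\<in>C. real (W (Suc k - 1 - j) a b) * Gs C j b)"
    using last by simp
  finally show ?case .
qed


lemma decomp2:
  assumes "a \<in> C"
  shows "out k a \<le> (\<Sum>b\<in>C. real (W k a b))
     + (\<Sum>b\<in>C. \<Sum>y\<in>-C. real (adj E src rng b y) * (\<Sum>j<k. real (W (k-1-j) a b) * out j y))"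
proof -
  have "(\<Sum>j<k. \<Sum>b\<in>C. real (W (k-1-j) a b) * Gs C j b)
      = (\<Sum>j<k. \<Sum>b\<in>C. \<Sum>y\<in>-C. real (adj E src rng b y) * (real (W (k-1-j) a b) * out j y))"
    unfolding Gs_def sum_distrib_left by (intro sum.cong refl) (simp add: algebra_simps)
  also have "\<dots> = (\<Sum>b\<in>C. \<Sum>j<k. \<Sum>y\<in>-C. real (adj E src rng b y) * (real (W (k-1-j) a b) * out j y))"
    by (rule sum.swap)
  also have "\<dots> = (\<Sum>b\<in>C. \<Sum>y\<in>-C. \<Sum>j<k. real (adj E src rng b y) * (real (W (k-1-j) a b) * out j y))"
    by (rule sum.cong[OF refl], rule sum.swap)
  also have "\<dots> = (\<Sum>b\<in>C. \<Sum>y\<in>-C. real (adj E src rng b y) * (\<Sum>j<k. real (W (k-1-j) a b) * out j y))"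
    by (simp only: sum_distrib_left)
  finally show ?thesis using decomp[OF assms, of k] by simp
qed

lemma out_PB:
  assumes mu: "\<mu> > 0"
  shows "(\<forall>C\<in>components E src rng. (\<exists>w\<in>C. reach E src rng u w) \<longrightarrow> lambda_comp E src rng C \<le> \<mu>)
     \<Longrightarrow> PB \<mu> (\<lambda>k. out k u)"
proof (induction "card {w. reach E src rng u w}" arbitrary: u rule: less_induct)
  case less
  define C where "C = {w. reach E src rng u w \<and> reach E src rng w u}"
  have Ccomp: "C \<in> components E src rng" unfolding components_def C_def by blast
  have uC: "u \<in> C" by (simp add: C_def reach_refl)
  have "lambda_comp E src rng C \<le> \<mu>" using less.prems Ccomp uC reach_refl by blast
  from upper_bound[OF Ccomp this mu] obtain c d where
    cd: "\<forall>k. \<forall>a\<in>C. \<forall>b\<in>C. real (W k a b) \<le> c * (real k + 1)^d * \<mu>^k" by blast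
  have PW: "PB \<mu> (\<lambda>k. real (W k u b))" if "b \<in> C" for b
    unfolding PB_def using cd uC that by (intro exI[of _ c] exI[of _ d]) auto
  have Py: "PB \<mu> (\<lambda>k. real (adj E src rng b y) * (\<Sum>j<k. real (W (k-1-j) u b) * out j y))"
    if b: "b \<in> C" and y: "y \<in> -C" for b y
  proof (cases "adj E src rng b y = 0")
    case True
    then show ?thesis by (simp add: PB_zero)
  next
    case False
    have ruy: "reach E src rng u y"
      using b False adj_pos_reach reach_trans unfolding C_def by blast
    have nyu: "\<not> reach E src rng y u" using ruy y unfolding C_def by blast
    have sub: "{w. reach E src rng y w} \<subset> {w. reach E src rng u w}"
      using ruy nyu reach_trans reach_refl by blast
    have cl: "card {w. reach E src rng y w} < card {w. reach E src rng u w}"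
      by (rule psubset_card_mono[OF _ sub]) simp
    have pr: "\<forall>C\<in>components E src rng. (\<exists>w\<in>C. reach E src rng y w) \<longrightarrow> lambda_comp E src rng C \<le> \<mu>"
      using less.prems ruy reach_trans by blast
    have "PB \<mu> (\<lambda>k. out k y)" by (rule less.hyps[OF cl pr])
    then show ?thesis by (intro PB_cmult PB_conv[OF mu] PW b)
  qed
  have "PB \<mu> (\<lambda>k. (\<Sum>b\<in>C. real (W k u b))
     + (\<Sum>b\<in>C. \<Sum>y\<in>-C. real (adj E src rng b y) * (\<Sum>j<k. real (W (k-1-j) u b) * out j y)))"
    by (intro PB_add[OF mu] PB_sum[OF mu] PW Py finite) auto
  then show ?case
  proof (rule PB_mono[rotated])
    fix k
    have "out k u \<le> (\<Sum>b\<in>C. real (W k u b))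
     + (\<Sum>b\<in>C. \<Sum>y\<in>-C. real (adj E src rng b y) * (\<Sum>j<k. real (W (k-1-j) u b) * out j y))"
      by (rule decomp2[OF uC])
    then show "\<bar>out k u\<bar> \<le> \<bar>(\<Sum>b\<in>C. real (W k u b))
     + (\<Sum>b\<in>C. \<Sum>y\<in>-C. real (adj E src rng b y) * (\<Sum>j<k. real (W (k-1-j) u b) * out j y))\<bar>"
      using out_nonneg[of k u] by linarith
  qed
qed

end


lemma ln1_over_n: "(\<lambda>k. ln (real k + 1) / real k) \<longlonglongrightarrow> 0"
proof -
  have a: "(\<lambda>k. ln (real (Suc k)) / real (Suc k)) \<longlonglongrightarrow> 0"
    using LIMSEQ_Suc[OF filterlim_compose[OF ln_x_over_x_tendsto_0 filterlim_real_sequentially]] by simp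
  have b: "(\<lambda>k. 1 + 1 / real k) \<longlonglongrightarrow> 1 + 0"
    by (intro tendsto_intros lim_inverse_n')
  have "(\<lambda>k. (ln (real (Suc k)) / real (Suc k)) * (1 + 1 / real k)) \<longlonglongrightarrow> 0 * (1 + 0)"
    by (intro tendsto_mult a b)
  moreover have "(ln (real (Suc k)) / real (Suc k)) * (1 + 1 / real k) = ln (real k + 1) / real k" for k
  proof (cases "k = 0")
    case True then show ?thesis by simp
  next
    case False
    then have "1 + 1 / real k = (real k + 1) / real k" by (simp add: field_simps)
    then show ?thesis by (simp add: add.commute)
  qed
  ultimately show ?thesis by simp
qed

lemma tend0: "(\<lambda>k. (a + b * ln (real k + 1)) / real k) \<longlonglongrightarrow> (0::real)"
proof -
  have "(\<lambda>k. a * (1 / real k) + b * (ln (real k + 1) / real k)) \<longlonglongrightarrow> a * 0 + b * 0"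
    by (intro tendsto_intros lim_inverse_n' ln1_over_n)
  then show ?thesis by (simp add: add_divide_distrib)
qed

lemma ln_bound:
  assumes c: "c > 0" and mu: "\<mu> > 0" and x: "x > 0" and le: "x \<le> c * (real k + 1)^d * \<mu>^k" and k: "k > 0"
  shows "ln x / real k \<le> (ln c + real d * ln (real k + 1)) / real k + ln \<mu>"
proof -
  have "ln x \<le> ln (c * (real k + 1)^d * \<mu>^k)" using le x by simp
  also have "\<dots> = ln c + real d * ln (real k + 1) + real k * ln \<mu>"
    using c mu by (simp add: ln_mult ln_realpow)
  finally have "ln x \<le> ln c + real d * ln (real k + 1) + real k * ln \<mu>" .
  then have "ln x / real k \<le> (ln c + real d * ln (real k + 1) + real k * ln \<mu>) / real k"
    using k by (intro divide_right_mono) auto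
  also have "\<dots> = (ln c + real d * ln (real k + 1)) / real k + ln \<mu>"
    using k by (simp add: field_simps)
  finally show ?thesis .
qed

lemma limsup_lower:
  fixes ps :: "nat \<Rightarrow> real"
  assumes c0: "c0 > 0" and lam: "r > 0" and freq: "\<And>N. \<exists>m\<ge>N. ps m \<ge> c0 * r^m"
  shows "ereal (ln r) \<le> limsup (\<lambda>k. ereal (log0 (ps k) / real k))"
proof (rule ccontr)
  let ?X = "\<lambda>k. ereal (log0 (ps k) / real k)"
  assume "\<not> ?thesis"
  then have "limsup ?X < ereal (ln r)" by simp
  then obtain z where z1: "limsup ?X < ereal z" and z2: "ereal z < ereal (ln r)"
    using ereal_dense2 by blast
  have ev1: "eventually (\<lambda>k. ?X k < ereal z) sequentially" by (rule Limsup_lessD[OF z1])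
  have "(\<lambda>k. (ln c0 + 0 * ln (real k + 1)) / real k) \<longlonglongrightarrow> 0" by (rule tend0)
  then have "(\<lambda>k. ln c0 / real k) \<longlonglongrightarrow> 0" by simp
  moreover have "z - ln r < 0" using z2 by simp
  ultimately have ev2: "eventually (\<lambda>k. z - ln r < ln c0 / real k) sequentially"
    by (rule order_tendstoD(1))
  from eventually_conj[OF ev1 ev2] obtain N where
    N: "\<And>k. k \<ge> N \<Longrightarrow> ?X k < ereal z \<and> z - ln r < ln c0 / real k"
    unfolding eventually_sequentially by blast
  obtain m where m: "m \<ge> max N 1" and pm: "ps m \<ge> c0 * r^m" using freq by blast
  have m1: "real m > 0" using m by simp
  have pos: "ps m > 0" using pm c0 lam by (meson order_less_le_trans mult_pos_pos zero_less_power)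
  have "ln (c0 * r^m) \<le> ln (ps m)" using pm pos c0 lam by simp
  then have "ln c0 + real m * ln r \<le> ln (ps m)" using c0 lam by (simp add: ln_mult ln_realpow)
  then have "(ln c0 + real m * ln r) / real m \<le> ln (ps m) / real m"
    using m1 by (intro divide_right_mono) auto
  then have "ln c0 / real m + ln r \<le> log0 (ps m) / real m"
    using m1 pos by (simp add: log0_def add_divide_distrib)
  moreover have "?X m < ereal z" "z - ln r < ln c0 / real m" using N m by auto
  ultimately show False by simp
qed

lemma limsup_upper:
  fixes ps :: "nat \<Rightarrow> real"
  assumes c: "c \<ge> 1" and mu: "\<mu> \<ge> 1" and nn: "\<And>k. ps k \<ge> 0"
    and le: "\<And>k. ps k \<le> c * (real k + 1)^d * \<mu>^k"
  shows "limsup (\<lambda>k. ereal (log0 (ps k) / real k)) \<le> ereal (ln \<mu>)"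
proof -
  let ?g = "\<lambda>k. (ln c + real d * ln (real k + 1)) / real k + ln \<mu>"
  have "(\<lambda>k. ?g k) \<longlonglongrightarrow> 0 + ln \<mu>" by (intro tendsto_add tend0 tendsto_const)
  then have lim: "(\<lambda>k. ereal (?g k)) \<longlonglongrightarrow> ereal (ln \<mu>)" by (simp add: tendsto_ereal)
  have lnc: "ln c \<ge> 0" using c by simp
  have lnmu: "ln \<mu> \<ge> 0" using mu by simp
  have b: "log0 (ps k) / real k \<le> ?g k" for k
  proof (cases "k = 0 \<or> ps k = 0")
    case True
    have "0 \<le> ?g k" using lnc lnmu by (intro add_nonneg_nonneg divide_nonneg_nonneg) auto
    then show ?thesis using True by (auto simp: log0_def)
  next
    case False
    then have "ps k > 0" "k > 0" using nn[of k] by auto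
    then show ?thesis using ln_bound[of c \<mu> "ps k" k d] le[of k] c mu by (simp add: log0_def)
  qed
  have "limsup (\<lambda>k. ereal (log0 (ps k) / real k)) \<le> limsup (\<lambda>k. ereal (?g k))"
    by (intro Limsup_mono) (simp add: b)
  also have "\<dots> = ereal (ln \<mu>)" by (rule lim_imp_Limsup[OF _ lim]) simp
  finally show ?thesis .
qed


context G begin

lemma ps_eq: "path_sum E src rng t k = (\<Sum>u\<in>UNIV. t u * out k u)"
  by (simp add: path_sum_W out_def)

lemma out_ge1: "out k u \<noteq> 0 \<Longrightarrow> out k u \<ge> 1"
proof -
  define s where "s = (\<Sum>w\<in>UNIV. W k u w)"
  have e: "out k u = real s" unfolding out_def s_def by simp
  assume "out k u \<noteq> 0"
  then have "s \<noteq> 0" using e by auto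
  then have "s \<ge> 1" by linarith
  then show ?thesis using e by simp
qed

lemma lam_nonneg: "C \<in> components E src rng \<Longrightarrow> lambda_comp E src rng C \<ge> 0"
proof -
  assume C: "C \<in> components E src rng"
  have A: "block_mat E src rng C \<in> carrier_mat (card C) (card C)" unfolding block_eq by simp
  from spectral_radius_mem_max(1)[OF A comp_card_pos[OF C]]
  show ?thesis unfolding lambda_comp_def by auto
qed

lemma finite_components: "finite (components E src rng)"
  unfolding components_def by simp

lemma ps_nonneg: "tracial_vec t \<Longrightarrow> path_sum E src rng t k \<ge> 0"
  unfolding ps_eq tracial_vec_def by (intro sum_nonneg mult_nonneg_nonneg out_nonneg) auto

lemma ps_tmin:
  assumes t: "tracial_vec t" and nz: "path_sum E src rng t k \<noteq> 0"
  shows "\<exists>u. t u \<noteq> 0 \<and> path_sum E src rng t k \<ge> t u"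
proof -
  have tn: "t u \<ge> 0" for u using t unfolding tracial_vec_def by auto
  from nz obtain u where u: "t u * out k u \<noteq> 0" unfolding ps_eq
    using sum.not_neutral_contains_not_neutral by blast
  then have tu: "t u \<noteq> 0" and o1: "out k u \<ge> 1" using out_ge1 by auto
  have "t u \<le> t u * out k u" using o1 tn[of u] by (simp add: mult_le_cancel_left1)
  also have "\<dots> \<le> (\<Sum>u\<in>UNIV. t u * out k u)"
    by (rule member_le_sum) (auto intro: mult_nonneg_nonneg tn out_nonneg)
  finally show ?thesis using tu unfolding ps_eq by blast
qed

lemma ps_PB:
  assumes t: "tracial_vec t" and mu: "\<mu> > 0"
    and rel: "\<And>C. C \<in> components E src rng \<Longrightarrow> (\<exists>v. t v \<noteq> 0 \<and> communicated E src rng v C)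
               \<Longrightarrow> lambda_comp E src rng C \<le> \<mu>"
  shows "\<exists>c d. c \<ge> 1 \<and> (\<forall>k. path_sum E src rng t k \<le> c * (real k + 1)^d * \<mu>^k)"
proof -
  have "PB \<mu> (\<lambda>k. \<Sum>u\<in>UNIV. t u * out k u)"
  proof (rule PB_sum[OF mu finite])
    fix u
    show "PB \<mu> (\<lambda>k. t u * out k u)"
    proof (cases "t u = 0")
      case True then show ?thesis by (simp add: PB_zero)
    next
      case False
      have "PB \<mu> (\<lambda>k. out k u)"
        by (rule out_PB[OF mu]) (use rel False in \<open>auto simp: communicated_def\<close>)
      then show ?thesis by (rule PB_cmult)
    qed
  qed
  then obtain c d where cd: "\<And>k. \<bar>\<Sum>u\<in>UNIV. t u * out k u\<bar> \<le> c * (real k + 1)^d * \<mu>^k"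
    unfolding PB_def by blast
  have c0: "c \<ge> 0" using cd[of 0] by simp
  have "path_sum E src rng t k \<le> (c + 1) * (real k + 1)^d * \<mu>^k" for k
  proof -
    have "path_sum E src rng t k \<le> c * (real k + 1)^d * \<mu>^k" using cd[of k] unfolding ps_eq by simp
    also have "\<dots> \<le> (c + 1) * (real k + 1)^d * \<mu>^k" using mu by (intro mult_right_mono) auto
    finally show ?thesis .
  qed
  then show ?thesis using c0 by (intro exI[of _ "c+1"] exI[of _ d]) auto
qed

lemma freq_lower:
  assumes t: "tracial_vec t" and C: "C \<in> components E src rng" and tu0: "t u0 \<noteq> 0"
    and com: "communicated E src rng u0 C" and lam: "lambda_comp E src rng C > 0"
  shows "\<exists>c0>0. \<forall>N. \<exists>m\<ge>N. path_sum E src rng t m \<ge> c0 * lambda_comp E src rng C ^ m"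
proof -
  let ?l = "lambda_comp E src rng C"
  have tn: "t u \<ge> 0" for u using t unfolding tracial_vec_def by auto
  have tpos: "t u0 > 0" using tn[of u0] tu0 by simp
  from com obtain w where w: "w \<in> C" "reach E src rng u0 w" unfolding communicated_def by blast
  obtain x where x: "C = {w. reach E src rng x w \<and> reach E src rng w x}" using components_form[OF C] by blast
  have hC: "reach E src rng u0 a" if "a \<in> C" for a
    using w that reach_trans unfolding x by blast
  define dd where "dd a = (SOME d. W d u0 a > 0)" for a
  have dd: "W (dd a) u0 a > 0" if "a \<in> C" for a
    unfolding dd_def using reach_W[OF hC[OF that]] by (rule someI_ex)
  define D where "D = Max (dd ` C)"
  have fC: "finite C" by simp
  have ddD: "dd a \<le> D" if "a \<in> C" for a unfolding D_def using fC that by simp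
  define L where "L = max 1 ?l"
  have L1: "L \<ge> 1" unfolding L_def by simp
  define c0 where "c0 = t u0 / L^D"
  have c0: "c0 > 0" unfolding c0_def using tpos L1 by simp
  have "\<exists>m\<ge>N. path_sum E src rng t m \<ge> c0 * ?l ^ m" for N
  proof -
    obtain a where a: "a \<in> C" and la: "?l ^ N \<le> (\<Sum>b\<in>C. real (W N a b))"
      using lower_bound[OF C, of N] by blast
    define m where "m = dd a + N"
    have "(\<Sum>b\<in>C. real (W N a b)) \<le> (\<Sum>b\<in>C. real (W m u0 b))"
    proof (rule sum_mono)
      fix b assume b: "b \<in> C"
      have "W N a b \<le> W (dd a) u0 a * W N a b" using dd[OF a] by simp
      also have "\<dots> \<le> (\<Sum>v\<in>UNIV. W (dd a) u0 v * W N v b)" by (rule member_le_sum) auto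
      also have "\<dots> = W m u0 b" unfolding m_def by (rule W_add[symmetric])
      finally show "real (W N a b) \<le> real (W m u0 b)" by simp
    qed
    also have "\<dots> \<le> out m u0" unfolding out_def by (rule sum_mono2) auto
    finally have om: "?l ^ N \<le> out m u0" using la by linarith
    have "t u0 * out m u0 \<le> (\<Sum>u\<in>UNIV. t u * out m u)"
      by (rule member_le_sum) (auto intro: mult_nonneg_nonneg tn out_nonneg)
    then have psm: "t u0 * ?l ^ N \<le> path_sum E src rng t m"
      unfolding ps_eq using om tpos by (meson mult_left_mono order_trans tn)
    have "?l ^ (dd a) \<le> L ^ (dd a)" unfolding L_def using lam by (intro power_mono) auto
    also have "\<dots> \<le> L ^ D" using L1 ddD[OF a] by (intro power_increasing) auto
    finally have lpow: "?l ^ (dd a) \<le> L ^ D" .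
    have "c0 * ?l ^ m = t u0 * ?l ^ N * (?l ^ (dd a) / L ^ D)"
      unfolding c0_def m_def by (simp add: power_add field_simps)
    also have "\<dots> \<le> t u0 * ?l ^ N * 1"
      using lpow L1 tpos lam by (intro mult_left_mono) (auto simp: divide_le_eq_1)
    also have "\<dots> \<le> path_sum E src rng t m" using psm by simp
    finally show ?thesis unfolding m_def by (intro exI[of _ "dd a + N"]) auto
  qed
  then show ?thesis using c0 by blast
qed


lemma main:
  assumes t: "tracial_vec t"
  shows "entropy E src rng t =
    ereal (Max {log0 (lambda_comp E src rng C) | C.
                 C \<in> components E src rng \<and> (\<exists>v. t v \<noteq> 0 \<and> communicated E src rng v C)})"
proof -
  define Rel where "Rel = {C. C \<in> components E src rng \<and> (\<exists>v. t v \<noteq> 0 \<and> communicated E src rng v C)}"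
  have Seq: "{log0 (lambda_comp E src rng C) | C.
                 C \<in> components E src rng \<and> (\<exists>v. t v \<noteq> 0 \<and> communicated E src rng v C)}
      = (\<lambda>C. log0 (lambda_comp E src rng C)) ` Rel" unfolding Rel_def by auto
  have finRel: "finite Rel"
    by (rule finite_subset[OF _ finite_components]) (auto simp: Rel_def)
  have tn: "t u \<ge> 0" for u using t unfolding tracial_vec_def by auto
  have ts: "(\<Sum>u\<in>UNIV. t u) = 1" using t unfolding tracial_vec_def by auto
  obtain u0 where u0: "t u0 \<noteq> 0"
  proof (cases "\<exists>u. t u \<noteq> 0")
    case False
    then have "(\<Sum>u\<in>UNIV. t u) = 0" by simp
    with ts show ?thesis by simp
  qed blast
  define C0 where "C0 = {w. reach E src rng u0 w \<and> reach E src rng w u0}"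
  have C0c: "C0 \<in> components E src rng" unfolding components_def C0_def by blast
  have "communicated E src rng u0 C0"
    unfolding communicated_def C0_def using reach_refl by blast
  then have C0: "C0 \<in> Rel" unfolding Rel_def using C0c u0 by blast
  then have RelNE: "Rel \<noteq> {}" by blast
  let ?ps = "path_sum E src rng t"
  show ?thesis
  proof (cases "eventually (\<lambda>k. ?ps k = 0) sequentially")
    case True
    have lz: "lambda_comp E src rng C = 0" if C: "C \<in> Rel" for C
    proof (rule ccontr)
      assume "lambda_comp E src rng C \<noteq> 0"
      moreover have Cc: "C \<in> components E src rng" using C unfolding Rel_def by blast
      ultimately have lp: "lambda_comp E src rng C > 0" using lam_nonneg[OF Cc] by simp
      from C obtain v where v: "t v \<noteq> 0" "communicated E src rng v C" unfolding Rel_def by blast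
      from freq_lower[OF t Cc v lp] obtain c0 where c0: "c0 > 0"
        and fr: "\<And>N. \<exists>m\<ge>N. ?ps m \<ge> c0 * lambda_comp E src rng C ^ m" by blast
      from True obtain N where N: "\<And>k. k \<ge> N \<Longrightarrow> ?ps k = 0" unfolding eventually_sequentially by blast
      from fr[of N] obtain m where "m \<ge> N" "?ps m \<ge> c0 * lambda_comp E src rng C ^ m" by blast
      moreover have "c0 * lambda_comp E src rng C ^ m > 0" using c0 lp by simp
      ultimately show False using N by fastforce
    qed
    have "(\<lambda>C. log0 (lambda_comp E src rng C)) ` Rel = {0}"
    proof
      show "(\<lambda>C. log0 (lambda_comp E src rng C)) ` Rel \<subseteq> {0}" using lz by (auto simp: log0_def)
      show "{0} \<subseteq> (\<lambda>C. log0 (lambda_comp E src rng C)) ` Rel"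
        using lz[OF C0] C0 by (auto simp: log0_def intro!: image_eqI[of _ _ C0])
    qed
    then show ?thesis using True unfolding entropy_def Seq by simp
  next
    case False
    define L where "L = Max (lambda_comp E src rng ` Rel)"
    have "L \<in> lambda_comp E src rng ` Rel" unfolding L_def using finRel RelNE by (intro Max_in) auto
    then obtain Cs where Cs: "Cs \<in> Rel" and LCs: "lambda_comp E src rng Cs = L" by auto
    have Lge: "lambda_comp E src rng C \<le> L" if "C \<in> Rel" for C
      unfolding L_def using finRel that by (intro Max_ge) auto
    have Csc: "Cs \<in> components E src rng" using Cs unfolding Rel_def by blast
    have L0: "L \<ge> 0" using lam_nonneg[OF Csc] LCs by simp
    have rel: "\<And>C. C \<in> components E src rng \<Longrightarrow> (\<exists>v. t v \<noteq> 0 \<and> communicated E src rng v C)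
               \<Longrightarrow> lambda_comp E src rng C \<le> L"
      using Lge unfolding Rel_def by blast
    have freqnz: "\<exists>k\<ge>N. ?ps k \<noteq> 0" for N
      using False unfolding eventually_sequentially by blast
    define tmin where "tmin = Min (t ` {u. t u \<noteq> 0})"
    have fin_t: "finite (t ` {u. t u \<noteq> 0})" by simp
    have net: "t ` {u. t u \<noteq> 0} \<noteq> {}" using u0 by blast
    have tmin_pos: "tmin > 0"
      unfolding tmin_def using fin_t net tn by (subst Min_gr_iff) (auto simp: order_less_le)
    have tmin_le: "tmin \<le> t u" if "t u \<noteq> 0" for u
      unfolding tmin_def using fin_t that by (intro Min_le) auto
    have ps_ge: "?ps k \<ge> tmin" if "?ps k \<noteq> 0" for k
      using ps_tmin[OF t that] tmin_le by fastforce
    have L1: "L \<ge> 1"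
    proof (rule ccontr)
      assume "\<not> L \<ge> 1"
      define \<mu> where "\<mu> = (1 + L) / 2"
      have mu: "\<mu> > 0" "\<mu> < 1" "L \<le> \<mu>" using L0 \<open>\<not> L \<ge> 1\<close> unfolding \<mu>_def by auto
      have rel': "\<And>C. C \<in> components E src rng \<Longrightarrow> (\<exists>v. t v \<noteq> 0 \<and> communicated E src rng v C)
               \<Longrightarrow> lambda_comp E src rng C \<le> \<mu>"
        using rel mu(3) by fastforce
      from ps_PB[OF t mu(1) rel'] obtain c d where c1: "c \<ge> 1"
        and bd: "\<And>k. ?ps k \<le> c * (real k + 1)^d * \<mu>^k" by blast
      have "(\<lambda>k. ((ln tmin - ln c) + (- real d) * ln (real k + 1)) / real k) \<longlonglongrightarrow> 0"
        by (rule tend0)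
      moreover have "ln \<mu> < 0" using mu by simp
      ultimately have "eventually (\<lambda>k. ln \<mu> < ((ln tmin - ln c) + (- real d) * ln (real k + 1)) / real k) sequentially"
        by (rule order_tendstoD(1))
      then obtain N where N: "\<And>k. k \<ge> N \<Longrightarrow> ln \<mu> < ((ln tmin - ln c) + (- real d) * ln (real k + 1)) / real k"
        unfolding eventually_sequentially by blast
      obtain k where k: "k \<ge> max N 1" and nz: "?ps k \<noteq> 0" using freqnz by blast
      have pos: "?ps k > 0" using nz ps_nonneg[OF t, of k] by simp
      have kp: "k > 0" using k by simp
      have lb: "ln (?ps k) / real k \<le> (ln c + real d * ln (real k + 1)) / real k + ln \<mu>"
        using ln_bound[of c \<mu> "?ps k" k d] c1 mu(1) pos bd[of k] kp by simp
      have "ln tmin \<le> ln (?ps k)" using ps_ge[OF nz] tmin_pos by simp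
      then have "ln tmin / real k \<le> ln (?ps k) / real k" using kp by (intro divide_right_mono) auto
      with lb have "ln tmin / real k - (ln c + real d * ln (real k + 1)) / real k \<le> ln \<mu>" by linarith
      moreover have "ln tmin / real k - (ln c + real d * ln (real k + 1)) / real k
          = ((ln tmin - ln c) + (- real d) * ln (real k + 1)) / real k"
        by (simp add: diff_divide_distrib add_divide_distrib)
      ultimately show False using N[of k] k by linarith
    qed
    have Mx: "Max ((\<lambda>C. log0 (lambda_comp E src rng C)) ` Rel) = ln L"
    proof (rule Max_eqI)
      show "finite ((\<lambda>C. log0 (lambda_comp E src rng C)) ` Rel)" using finRel by simp
    next
      fix y assume "y \<in> (\<lambda>C. log0 (lambda_comp E src rng C)) ` Rel"
      then obtain C where C: "C \<in> Rel" and y: "y = log0 (lambda_comp E src rng C)" by blast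
      have Cc: "C \<in> components E src rng" using C unfolding Rel_def by blast
      show "y \<le> ln L"
      proof (cases "lambda_comp E src rng C = 0")
        case True
        then show ?thesis using y L1 by (simp add: log0_def)
      next
        case False
        then have "lambda_comp E src rng C > 0" using lam_nonneg[OF Cc] by simp
        then show ?thesis using y Lge[OF C] False by (simp add: log0_def)
      qed
    next
      have "log0 (lambda_comp E src rng Cs) = ln L" using LCs L1 by (simp add: log0_def)
      then show "ln L \<in> (\<lambda>C. log0 (lambda_comp E src rng C)) ` Rel" using Cs by force
    qed
    have ent: "entropy E src rng t = limsup (\<lambda>k. ereal (log0 (?ps k) / real k))"
      using False unfolding entropy_def by simp
    have Lpos: "L > 0" using L1 by simp
    from ps_PB[OF t Lpos rel] obtain c d where c1: "c \<ge> 1"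
      and bd: "\<And>k. ?ps k \<le> c * (real k + 1)^d * L^k" by blast
    have up: "limsup (\<lambda>k. ereal (log0 (?ps k) / real k)) \<le> ereal (ln L)"
      by (rule limsup_upper[OF c1 L1 ps_nonneg[OF t] bd])
    from Cs obtain v where v: "t v \<noteq> 0" "communicated E src rng v Cs" unfolding Rel_def by blast
    from freq_lower[OF t Csc v] LCs Lpos obtain c0 where c0: "c0 > 0"
      and fr: "\<And>N. \<exists>m\<ge>N. ?ps m \<ge> c0 * L ^ m" by auto
    have lo: "ereal (ln L) \<le> limsup (\<lambda>k. ereal (log0 (?ps k) / real k))"
      by (rule limsup_lower[OF c0 Lpos fr])
    show ?thesis unfolding ent Seq Mx using up lo by (rule antisym)
  qed
qed

end


theorem proposition8p6:
  fixes E :: "'e::finite set" and src rng :: "'e::finite \<Rightarrow> 'v::finite" and t :: "'v \<Rightarrow> real"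
  assumes "tracial_vec t"
  shows "entropy E src rng t =
    ereal (Max {log0 (lambda_comp E src rng C) | C.
                 C \<in> components E src rng \<and> (\<exists>v. t v \<noteq> 0 \<and> communicated E src rng v C)})"
  by (rule G.main[OF assms])

end
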